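(* Let $X$ be a quadratic planar vector field and, for $\epsilon\in\mathbb{R}$, let $\Phi_\epsilon(\mathbf{x})=\mathbf{x}+2\epsilon\left(I-\epsilon\,\mathrm{D}X(\mathbf{x})\right)^{-1}X(\mathbf{x})$ be its associated Kahan-Hirota-Kimura (KHK) map. Let $C$ be a closed curve invariant under $\Phi_\epsilon$. Suppose that $\Phi_\epsilon|_C$ is conjugate to a rotation with rotation number $\rho_\epsilon$. Then $\Phi_{-\epsilon}|_C$ is conjugate to a rotation with rotation number $\rho_{-\epsilon}=1-\rho_\epsilon$.
   Context: $\mathrm{D}X$ denotes the Jacobian matrix of $X$ and $I$ the $2\times 2$ identity matrix. A homeomorphism of a closed curve (a topological circle) conjugate to a rotation by angle $\theta\in[0,2\pi)$ is said to have rotation number $\theta/(2\pi)\in[0,1)$. *)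

theory Defs
  imports "HOL-Analysis.Analysis"
begin

definition quadratic_vector_field :: "(real^2 \<Rightarrow> real^2) \<Rightarrow> bool" where
  "quadratic_vector_field X \<longleftrightarrow>
     (\<exists>a b c d e f :: 2 \<Rightarrow> real. \<forall>x. \<forall>i.
        X x $ i = a i + b i * x$1 + c i * x$2 + d i * (x$1)^2 + e i * x$1 * x$2 + f i * (x$2)^2)"

definition khk :: "(real^2 \<Rightarrow> real^2) \<Rightarrow> real \<Rightarrow> real^2 \<Rightarrow> real^2" where
  "khk X \<epsilon> x = x + (2 * \<epsilon>) *\<^sub>R (matrix_inv (mat 1 - \<epsilon> *\<^sub>R jacobian X (at x)) *v X x)"

definition rot :: "real \<Rightarrow> real^2 \<Rightarrow> real^2" where
  "rot \<theta> v = (\<chi> i. if i = 1 then cos \<theta> * v$1 - sin \<theta> * v$2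
                        else sin \<theta> * v$1 + cos \<theta> * v$2)"

abbreviation S1 :: "(real^2) set" where "S1 \<equiv> sphere 0 1"

definition conj_to_rotation :: "(real^2 \<Rightarrow> real^2) \<Rightarrow> (real^2) set \<Rightarrow>
      (real^2 \<Rightarrow> real^2) \<Rightarrow> (real^2 \<Rightarrow> real^2) \<Rightarrow> real \<Rightarrow> bool" where
  "conj_to_rotation f C h g \<theta> \<longleftrightarrow>
     homeomorphism C S1 h g \<and> (\<forall>x\<in>C. f x \<in> C \<and> h (f x) = rot \<theta> (h x))"

end

theory Submission
  imports Defs
begin

lemma minv: assumes "invertible (M::real^2^2)" and "M *v u = w" shows "u = matrix_inv M *v w"
proof -
  have "M ** matrix_inv M = mat 1 \<and> matrix_inv M ** M = mat 1"
    using assms(1) unfolding invertible_def matrix_inv_def by (rule someI_ex)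
  then show ?thesis using assms(2) by (metis matrix_vector_mul_assoc matrix_vector_mul_lid)
qed

lemma mv_uminus: "(A::real^2^2) *v (- v) = - (A *v v)"
  using matrix_vector_mult_scaleR[of A "-1" v] by simp

lemma quad_deriv:
  fixes a b c d e f :: "2 \<Rightarrow> real" and x :: "real^2" and X :: "real^2 \<Rightarrow> real^2"
  defines "D \<equiv> \<lambda>(x::real^2) (v::real^2). (\<chi> i. b i * v$1 + c i * v$2 + 2 * d i * x$1 * v$1 + e i * (x$1 * v$2 + x$2 * v$1) + 2 * f i * x$2 * v$2) :: real^2"
  assumes "\<forall>x. \<forall>i. X x $ i = a i + b i * x$1 + c i * x$2 + d i * (x$1)^2 + e i * x$1 * x$2 + f i * (x$2)^2"
  shows "(X has_derivative D x) (at x)"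
proof -
  let ?A = "(\<chi> i. a i)::real^2" and ?B = "(\<chi> i. b i)::real^2" and ?C = "(\<chi> i. c i)::real^2"
  let ?D = "(\<chi> i. d i)::real^2" and ?E = "(\<chi> i. e i)::real^2" and ?F = "(\<chi> i. f i)::real^2"
  have XX: "X = (\<lambda>x. ?A + (x$1) *\<^sub>R ?B + (x$2) *\<^sub>R ?C + ((x$1)^2) *\<^sub>R ?D + (x$1 * x$2) *\<^sub>R ?E + ((x$2)^2) *\<^sub>R ?F)"
    using assms(2) by (auto simp: vec_eq_iff algebra_simps)
  have l1: "((\<lambda>x::real^2. x$i) has_derivative (\<lambda>v. v$i)) (at x)" for i
    by (rule bounded_linear_imp_has_derivative[OF bounded_linear_vec_nth])
  show ?thesis unfolding XX
    apply (rule derivative_eq_intros l1 refl)+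
    apply (rule ext)
    apply (simp add: D_def vec_eq_iff)
    done
qed

lemma jac_eq:
  fixes a b c d e f :: "2 \<Rightarrow> real" and x v :: "real^2" and X :: "real^2 \<Rightarrow> real^2"
  assumes "\<forall>x. \<forall>i. X x $ i = a i + b i * x$1 + c i * x$2 + d i * (x$1)^2 + e i * x$1 * x$2 + f i * (x$2)^2"
  shows "jacobian X (at x) *v v = (\<chi> i. b i * v$1 + c i * v$2 + 2 * d i * x$1 * v$1 + e i * (x$1 * v$2 + x$2 * v$1) + 2 * f i * x$2 * v$2)"
proof -
  let ?D = "\<lambda>(x::real^2) (v::real^2). (\<chi> i. b i * v$1 + c i * v$2 + 2 * d i * x$1 * v$1 + e i * (x$1 * v$2 + x$2 * v$1) + 2 * f i * x$2 * v$2) :: real^2"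
  have der: "(X has_derivative ?D x) (at x)" by (rule quad_deriv[OF assms])
  then have eq: "frechet_derivative X (at x) = ?D x" by (rule frechet_derivative_at[symmetric])
  have lin: "linear (?D x)" by (rule has_derivative_linear[OF der])
  have "jacobian X (at x) = matrix (?D x)" unfolding jacobian_def eq ..
  then show ?thesis using matrix_works[OF lin[folded linear_matrix_vector_mul_eq], of v] by (simp only:)
qed

lemma sym_id:
  fixes xi yi x1 x2 y1 y2 a b c d e f \<epsilon> :: real
  shows "((xi - yi) + \<epsilon> * (b * (x1 - y1) + c * (x2 - y2) + 2 * d * y1 * (x1 - y1) + e * (y1 * (x2 - y2) + y2 * (x1 - y1)) + 2 * f * y2 * (x2 - y2)))
         - (- 2 * \<epsilon> * (a + b * y1 + c * y2 + d * y1^2 + e * y1 * y2 + f * y2^2))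
         = - (((yi - xi) - \<epsilon> * (b * (y1 - x1) + c * (y2 - x2) + 2 * d * x1 * (y1 - x1) + e * (x1 * (y2 - x2) + x2 * (y1 - x1)) + 2 * f * x2 * (y2 - x2)))
         - (2 * \<epsilon> * (a + b * x1 + c * x2 + d * x1^2 + e * x1 * x2 + f * x2^2)))"
  by (simp add: algebra_simps power2_eq_square)

lemma khk_rev:
  fixes X :: "real^2 \<Rightarrow> real^2" and x :: "real^2"
  assumes quad: "quadratic_vector_field X"
    and i1: "invertible (mat 1 - \<epsilon> *\<^sub>R jacobian X (at x))"
    and i2: "invertible (mat 1 - (- \<epsilon>) *\<^sub>R jacobian X (at (khk X \<epsilon> x)))"
  shows "khk X (- \<epsilon>) (khk X \<epsilon> x) = x"
proof -
  obtain a b c d e f :: "2 \<Rightarrow> real" where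
    XX: "\<forall>x. \<forall>i. X x $ i = a i + b i * x$1 + c i * x$2 + d i * (x$1)^2 + e i * x$1 * x$2 + f i * (x$2)^2"
    using quad unfolding quadratic_vector_field_def by blast
  define y where "y = khk X \<epsilon> x"
  let ?M = "mat 1 - \<epsilon> *\<^sub>R jacobian X (at x)"
  let ?N = "mat 1 - (- \<epsilon>) *\<^sub>R jacobian X (at y)"
  have "?M ** matrix_inv ?M = mat 1"
    using i1 unfolding invertible_def matrix_inv_def by (metis (mono_tags, lifting) someI_ex)
  have "y - x = (2 * \<epsilon>) *\<^sub>R (matrix_inv ?M *v X x)" unfolding y_def khk_def by simp
  then have "?M *v (y - x) = (2 * \<epsilon>) *\<^sub>R X x"
    using \<open>?M ** matrix_inv ?M = mat 1\<close>
    by (simp add: matrix_vector_mult_scaleR matrix_vector_mul_assoc)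
  then have h: "(y - x) - \<epsilon> *\<^sub>R (jacobian X (at x) *v (y - x)) = (2 * \<epsilon>) *\<^sub>R X x"
    by (simp add: matrix_vector_mult_diff_rdistrib scaleR_matrix_vector_assoc)
  have "(x - y) + \<epsilon> *\<^sub>R (jacobian X (at y) *v (x - y)) = (- 2 * \<epsilon>) *\<^sub>R X y"
  proof -
    have hi: "((y - x) - \<epsilon> *\<^sub>R (jacobian X (at x) *v (y - x))) $ i = ((2 * \<epsilon>) *\<^sub>R X x) $ i" for i
      using h by simp
    show ?thesis
      unfolding vec_eq_iff
    proof
      fix i
      have hh: "(y$i - x$i) - \<epsilon> * (b i * (y$1 - x$1) + c i * (y$2 - x$2) + 2 * d i * x$1 * (y$1 - x$1) + e i * (x$1 * (y$2 - x$2) + x$2 * (y$1 - x$1)) + 2 * f i * x$2 * (y$2 - x$2))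
         = 2 * \<epsilon> * (a i + b i * x$1 + c i * x$2 + d i * (x$1)^2 + e i * x$1 * x$2 + f i * (x$2)^2)"
        using hi[of i] unfolding jac_eq[OF XX] by (simp add: XX)
      have "(x$i - y$i) + \<epsilon> * (b i * (x$1 - y$1) + c i * (x$2 - y$2) + 2 * d i * y$1 * (x$1 - y$1) + e i * (y$1 * (x$2 - y$2) + y$2 * (x$1 - y$1)) + 2 * f i * y$2 * (x$2 - y$2))
         = - 2 * \<epsilon> * (a i + b i * y$1 + c i * y$2 + d i * (y$1)^2 + e i * y$1 * y$2 + f i * (y$2)^2)"
        using hh sym_id[of "x$i" "y$i" \<epsilon> "b i" "x$1" "y$1" "c i" "x$2" "y$2" "d i" "e i" "f i" "a i"] by linarith
      then show "((x - y) + \<epsilon> *\<^sub>R (jacobian X (at y) *v (x - y))) $ i = ((- 2 * \<epsilon>) *\<^sub>R X y) $ i"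
        unfolding jac_eq[OF XX] by (simp add: XX)
    qed
  qed
  then have "?N *v (x - y) = (- 2 * \<epsilon>) *\<^sub>R X y"
    by (simp add: matrix_vector_mult_diff_rdistrib matrix_vector_mult_add_rdistrib scaleR_matrix_vector_assoc)
  then have "x - y = matrix_inv ?N *v ((- 2 * \<epsilon>) *\<^sub>R X y)"
    using minv i2 y_def by blast
  moreover have "khk X (- \<epsilon>) y = y + matrix_inv ?N *v ((- 2 * \<epsilon>) *\<^sub>R X y)"
    unfolding khk_def by (simp add: matrix_vector_mult_scaleR mv_uminus)
  ultimately have "khk X (- \<epsilon>) y = x" by (metis add.commute diff_add_cancel)
  then show ?thesis unfolding y_def .
qed

lemma norm2: "norm (v::real^2) = sqrt ((v$1)^2 + (v$2)^2)"
  by (simp add: norm_vec_def L2_set_def sum_2)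

lemma rot_norm: "norm (rot t v) = norm v"
proof -
  have "(cos t * v$1 - sin t * v$2)^2 + (sin t * v$1 + cos t * v$2)^2 = (v$1)^2 + (v$2)^2"
    using sin_cos_squared_add[of t] by algebra
  then show ?thesis by (simp add: norm2 rot_def)
qed

lemma rot_inv: "rot t (rot (- t) v) = v"
proof -
  have "(cos t * (cos t * v$1 + sin t * v$2) - sin t * (- sin t * v$1 + cos t * v$2)) = v$1"
    using sin_cos_squared_add[of t] by algebra
  moreover have "(sin t * (cos t * v$1 + sin t * v$2) + cos t * (- sin t * v$1 + cos t * v$2)) = v$2"
    using sin_cos_squared_add[of t] by algebra
  ultimately show ?thesis unfolding rot_def vec_eq_iff forall_2 by simp
qed

lemma rot_period: "rot (2 * pi * (1 - r)) v = rot (- (2 * pi * r)) v"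
proof -
  have "2 * pi * (1 - r) = - (2 * pi * r) + 2 * pi" by (simp add: algebra_simps)
  then show ?thesis unfolding rot_def by (simp only: cos_periodic sin_periodic)
qed

theorem lemma2:
  fixes X :: "real^2 \<Rightarrow> real^2" and \<epsilon> \<rho> :: real
    and C :: "(real^2) set" and h g :: "real^2 \<Rightarrow> real^2"
  assumes quad: "quadratic_vector_field X"
    and closed_curve: "C homeomorphic S1"
    and defined_eps: "\<forall>x\<in>C. invertible (mat 1 - \<epsilon> *\<^sub>R jacobian X (at x))"
    and defined_neg_eps: "\<forall>x\<in>C. invertible (mat 1 - (- \<epsilon>) *\<^sub>R jacobian X (at x))"
    and invariant: "khk X \<epsilon> ` C \<subseteq> C"
    and rho: "0 \<le> \<rho>" "\<rho> < 1"
    and conj: "conj_to_rotation (khk X \<epsilon>) C h g (2 * pi * \<rho>)"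
  shows "conj_to_rotation (khk X (- \<epsilon>)) C h g (2 * pi * (1 - \<rho>))"
proof -
  let ?t = "2 * pi * \<rho>"
  have hom: "homeomorphism C S1 h g" and cj: "\<forall>x\<in>C. khk X \<epsilon> x \<in> C \<and> h (khk X \<epsilon> x) = rot ?t (h x)"
    using conj unfolding conj_to_rotation_def by auto
  have "khk X (- \<epsilon>) y \<in> C \<and> h (khk X (- \<epsilon>) y) = rot (2 * pi * (1 - \<rho>)) (h y)" if yC: "y \<in> C" for y
  proof -
    define x where "x = g (rot (- ?t) (h y))"
    have "h y \<in> S1" using hom yC unfolding homeomorphism_def by auto
    then have "rot (- ?t) (h y) \<in> S1" by (simp add: rot_norm)
    then have xC: "x \<in> C" and hx: "h x = rot (- ?t) (h y)"
      using hom unfolding x_def homeomorphism_def by auto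
    have "h (khk X \<epsilon> x) = h y" using cj xC hx rot_inv by simp
    then have "g (h (khk X \<epsilon> x)) = g (h y)" by simp
    moreover have "g (h z) = z" if "z \<in> C" for z using hom that unfolding homeomorphism_def by auto
    ultimately have Fx: "khk X \<epsilon> x = y" using cj xC yC by metis
    have "khk X (- \<epsilon>) y = x"
      using khk_rev[OF quad, of \<epsilon> x] defined_eps defined_neg_eps xC yC Fx by simp
    then show ?thesis using xC hx rot_period by simp
  qed
  then show ?thesis using hom unfolding conj_to_rotation_def by blast
qed

end
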